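(* Under the hypotheses of the following setting, for every admissible $(\bar s,\bar D)\in[s_{\min},s_\mathrm{in})\times[D_{\min},D_{\max}]$ one has $$\bar D=\mu(\bar s)\quad\text{if and only if}\quad s_\mathrm{eq}(\bar s,\bar D)=\bar s.$$ Setting: $s_\mathrm{in}>0$, $0<s_{\min}<s_\mathrm{in}$, $0<D_{\min}<D_{\max}$, $G_1>0$; $\mu:[0,s_\mathrm{in}]\to[0,\infty)$ is continuously differentiable with $\mu(0)=0$, $\mu(s)>0$ for $s>0$, $D_{\min}<\mu(s)$ for all $s\in[s_{\min},s_\mathrm{in}]$, $D_{\max}>\mu(s)$ for all $s\in[0,s_\mathrm{in}]$; and $G_1>-\min_{[0,s_\mathrm{in}]}\mu'$ and $G_1>-(\mu(s_\mathrm{in})-\bar D)/(s_\mathrm{in}-\bar s)$.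
   Context: $s_\mathrm{eq}(\bar s,\bar D)=\lim_{t\to\infty}s(t)$, where $(s,b)$ solves the closed-loop system $\dot s=-\mu(s)b+D(s_\mathrm{in}-s)$, $\dot b=\mu(s)b-Db$ with $D=\operatorname{sat}_{[D_{\min},D_{\max}]}(\bar D-G_1(s-\bar s))$ from any initial condition in $[0,s_\mathrm{in})\times(0,\infty)$ (this limit exists and is independent of the initial condition under the stated hypotheses). The saturation function is $\operatorname{sat}_{[D_{\min},D_{\max}]}(x)=D_{\max}$ if $x>D_{\max}$, $=x$ if $x\in[D_{\min},D_{\max}]$, $=D_{\min}$ if $x<D_{\min}$. *)

theory Defs
  imports "HOL-Analysis.Analysis"
begin

definition sat :: "real \<Rightarrow> real \<Rightarrow> real \<Rightarrow> real" where
  "sat Dmin Dmax x = (if x > Dmax then Dmax else if x < Dmin then Dmin else x)"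

definition feedback :: "real \<Rightarrow> real \<Rightarrow> real \<Rightarrow> real \<Rightarrow> real \<Rightarrow> real \<Rightarrow> real" where
  "feedback Dmin Dmax G1 sbar Dbar s = sat Dmin Dmax (Dbar - G1 * (s - sbar))"

definition closed_loop_sol ::
  "(real \<Rightarrow> real) \<Rightarrow> real \<Rightarrow> real \<Rightarrow> real \<Rightarrow> real \<Rightarrow> real \<Rightarrow> real
     \<Rightarrow> (real \<Rightarrow> real) \<Rightarrow> (real \<Rightarrow> real) \<Rightarrow> bool" where
  "closed_loop_sol mu s_in Dmin Dmax G1 sbar Dbar s b \<longleftrightarrow>
     0 \<le> s 0 \<and> s 0 < s_in \<and> 0 < b 0 \<and>
     (\<forall>t\<ge>0. (s has_real_derivative
                 (- mu (s t) * b t + feedback Dmin Dmax G1 sbar Dbar (s t) * (s_in - s t)))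
               (at t within {0..})) \<and>
     (\<forall>t\<ge>0. (b has_real_derivative
                 (mu (s t) * b t - feedback Dmin Dmax G1 sbar Dbar (s t) * b t))
               (at t within {0..}))"

end

theory Submission
  imports Defs "HOL-Real_Asymp.Real_Asymp"
begin


lemma mono_interior:
  fixes f f' :: "real \<Rightarrow> real"
  assumes "a \<le> b" "continuous_on {a..b} f"
    "\<And>x. a < x \<Longrightarrow> x < b \<Longrightarrow> (f has_real_derivative f' x) (at x)"
    "\<And>x. a < x \<Longrightarrow> x < b \<Longrightarrow> f' x \<ge> 0"
  shows "f a \<le> f b"
proof (cases "a = b")
  case True then show ?thesis by simp
next
  case False
  then have "a < b" using assms(1) by simp
  from MVT[OF this assms(2)] assms(3) obtain l z where z: "a < z" "z < b" "DERIV f z :> l" "f b - f a = (b - a) * l"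
    using real_differentiable_def by blast
  have "l = f' z" using DERIV_unique[OF z(3) assms(3)[OF z(1,2)]] .
  then have "l \<ge> 0" using assms(4)[OF z(1,2)] by simp
  then show ?thesis using z(4) \<open>a < b\<close> by (simp add: algebra_simps) (metis diff_ge_0_iff_ge mult_nonneg_nonneg less_eq_real_def \<open>a<b\<close> z(4) diff_gt_0_iff_gt)
qed

lemma escape:
  fixes f f' :: "real \<Rightarrow> real"
  assumes "\<forall>t\<ge>T. (f has_real_derivative f' t) (at t)" "\<forall>t\<ge>T. f' t \<ge> c" "c > 0"
    "\<forall>t\<ge>T. f t \<le> B"
  shows False
proof -
  define t where "t = T + \<bar>B - f T\<bar> / c + 1"
  have tT: "T \<le> t" using assms(3) unfolding t_def by simp
  have "(\<lambda>x. f x - c * x) T \<le> (\<lambda>x. f x - c * x) t"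
  proof (rule DERIV_nonneg_imp_nondecreasing[OF tT])
    fix x assume "T \<le> x" "x \<le> t"
    then show "\<exists>y. ((\<lambda>x. f x - c * x) has_real_derivative y) (at x) \<and> y \<ge> 0"
      using assms(1,2) by (intro exI[of _ "f' x - c"]) (auto intro!: derivative_eq_intros)
  qed
  then have "f t \<ge> f T + c * (t - T)" by (simp add: algebra_simps)
  moreover have "c * (t - T) = \<bar>B - f T\<bar> + c" using assms(3) unfolding t_def by (simp add: field_simps)
  ultimately have "f t > B" using assms(3) by linarith
  then show False using assms(4) tT by force
qed

lemma first_hit:
  fixes f :: "real \<Rightarrow> real"
  assumes "continuous_on {t0..t1} f" "f t0 < c" "c \<le> f t1" "t0 \<le> t1"
  shows "\<exists>m. t0 < m \<and> m \<le> t1 \<and> f m = c \<and> (\<forall>t. t0 \<le> t \<and> t < m \<longrightarrow> f t < c)"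
proof -
  define S where "S = {x \<in> {t0..t1}. (\<lambda>_. c) x \<le> f x}"
  have cl: "closed S" unfolding S_def
    by (rule continuous_on_closed_Collect_le) (auto intro: assms(1) continuous_on_const)
  have ne: "S \<noteq> {}" using assms unfolding S_def by auto
  have bdd: "bdd_below S" unfolding S_def by (rule bdd_belowI[of _ t0]) auto
  define m where "m = Inf S"
  have mS: "m \<in> S" unfolding m_def using closed_contains_Inf[OF ne bdd cl] .
  have below: "\<forall>t. t0 \<le> t \<and> t < m \<longrightarrow> f t < c"
  proof (intro allI impI)
    fix t assume "t0 \<le> t \<and> t < m"
    moreover have "t \<le> t1" using calculation mS unfolding S_def by auto
    ultimately show "f t < c" using cInf_lower[OF _ bdd, of t] unfolding m_def S_def by force
  qed
  have m1: "t0 \<le> m" "m \<le> t1" "c \<le> f m" using mS unfolding S_def by auto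
  have "m \<noteq> t0" using m1 assms(2) by auto
  then have mt0: "t0 < m" using m1 by simp
  have "f m \<le> c"
  proof (rule ccontr)
    assume "\<not> f m \<le> c"
    then have "f t0 \<le> c" "c \<le> f m" using assms(2) by auto
    from IVT'[OF this m1(1)] continuous_on_subset[OF assms(1)] m1 obtain x where
      "t0 \<le> x" "x \<le> m" "f x = c" by fastforce
    then show False using below \<open>\<not> f m \<le> c\<close> by (cases "x = m") auto
  qed
  then show ?thesis using mt0 m1 below by (intro exI[of _ m]) auto
qed

lemma barrier_up:
  fixes f f' :: "real \<Rightarrow> real"
  assumes "\<forall>t>t0. (f has_real_derivative f' t) (at t)" "continuous_on {t0..} f"
    "\<forall>t>t0. a < f t \<and> f t < ab \<longrightarrow> f' t < 0" "f t0 \<le> a" "a < ab" "t1 \<ge> t0"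
  shows "f t1 \<le> a"
proof (rule ccontr)
  assume "\<not> f t1 \<le> a"
  define c where "c = min (f t1) ((a + ab) / 2)"
  have c: "a < c" "c < ab" "c \<le> f t1" using \<open>\<not> f t1 \<le> a\<close> assms(5) unfolding c_def by (auto simp: min_def)
  have "continuous_on {t0..t1} f" using continuous_on_subset[OF assms(2)] by auto
  from first_hit[OF this _ c(3) assms(6)] c assms(4) obtain m where
    m: "t0 < m" "m \<le> t1" "f m = c" "\<forall>t. t0 \<le> t \<and> t < m \<longrightarrow> f t < c" by force
  have "f' m < 0" using assms(3) m c by auto
  from DERIV_neg_dec_left[OF assms(1)[rule_format, OF m(1)] this] obtain d where
    d: "d > 0" "\<forall>h>0. h < d \<longrightarrow> f m < f (m - h)" by blast
  define h where "h = min (d/2) (m - t0)"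
  have "h > 0" "h < d" using d m unfolding h_def by auto
  then have "f m < f (m - h)" using d by auto
  moreover have "t0 \<le> m - h" "m - h < m" using \<open>h>0\<close> unfolding h_def by auto
  ultimately show False using m by force
qed

lemma barrier_low:
  fixes f f' :: "real \<Rightarrow> real"
  assumes "\<forall>t>t0. (f has_real_derivative f' t) (at t)" "continuous_on {t0..} f"
    "\<forall>t>t0. ab < f t \<and> f t < a \<longrightarrow> f' t > 0" "f t0 \<ge> a" "ab < a" "t1 \<ge> t0"
  shows "f t1 \<ge> a"
proof -
  have "- f t1 \<le> - a"
    using barrier_up[where f="\<lambda>t. - f t" and f'="\<lambda>t. - f' t" and ab="- ab" and a="-a"]
      assms by (auto intro!: derivative_eq_intros continuous_intros)
  then show ?thesis by simp
qed



lemma sat_eq: "Dmin \<le> Dmax \<Longrightarrow> sat Dmin Dmax x = max Dmin (min Dmax x)"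
  unfolding sat_def by auto

lemma sat_bounds: "Dmin \<le> Dmax \<Longrightarrow> Dmin \<le> sat Dmin Dmax x \<and> sat Dmin Dmax x \<le> Dmax"
  unfolding sat_def by auto

theorem mainTheorem2:
  fixes mu mu' :: "real \<Rightarrow> real"
    and s_in s_min Dmin Dmax G1 sbar Dbar :: real
    and s b :: "real \<Rightarrow> real"
  assumes s_in_pos: "s_in > 0"
    and s_min: "0 < s_min" "s_min < s_in"
    and D_bounds: "0 < Dmin" "Dmin < Dmax"
    and G1_pos: "G1 > 0"
    and mu_deriv: "\<forall>x\<in>{0..s_in}. (mu has_real_derivative mu' x) (at x within {0..s_in})"
    and mu'_cont: "continuous_on {0..s_in} mu'"
    and mu_nonneg: "\<forall>x\<in>{0..s_in}. mu x \<ge> 0"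
    and mu_0: "mu 0 = 0"
    and mu_pos: "\<forall>x\<in>{0<..s_in}. mu x > 0"
    and Dmin_mu: "\<forall>x\<in>{s_min..s_in}. Dmin < mu x"
    and Dmax_mu: "\<forall>x\<in>{0..s_in}. mu x < Dmax"
    and G1_deriv: "G1 > - (INF x\<in>{0..s_in}. mu' x)"
    and sbar: "sbar \<in> {s_min..<s_in}"
    and Dbar: "Dbar \<in> {Dmin..Dmax}"
    and G1_Dbar: "G1 > - (mu s_in - Dbar) / (s_in - sbar)"
    and sol: "closed_loop_sol mu s_in Dmin Dmax G1 sbar Dbar s b"
  shows "Dbar = mu sbar \<longleftrightarrow> (s \<longlongrightarrow> sbar) at_top"
proof -
  define Df where "Df = feedback Dmin Dmax G1 sbar Dbar"
  define sd where "sd = (\<lambda>t. - mu (s t) * b t + Df (s t) * (s_in - s t))"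
  define bd where "bd = (\<lambda>t. mu (s t) * b t - Df (s t) * b t)"
  have Df_eq: "\<And>x. Df x = max Dmin (min Dmax (Dbar - G1 * (x - sbar)))"
    unfolding Df_def feedback_def using sat_eq D_bounds by simp
  have Df_bd: "\<And>x. Dmin \<le> Df x \<and> Df x \<le> Dmax" unfolding Df_eq using D_bounds by auto
  have s0: "0 \<le> s 0" "s 0 < s_in" "0 < b 0" using sol unfolding closed_loop_sol_def by auto
  have ds: "\<And>t. t \<ge> 0 \<Longrightarrow> (s has_real_derivative sd t) (at t within {0..})"
    using sol unfolding closed_loop_sol_def sd_def Df_def by auto
  have db: "\<And>t. t \<ge> 0 \<Longrightarrow> (b has_real_derivative bd t) (at t within {0..})"
    using sol unfolding closed_loop_sol_def bd_def Df_def by auto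
  have ds': "\<And>t. t > 0 \<Longrightarrow> (s has_real_derivative sd t) (at t)"
    using ds at_within_interior[of _ "{0::real..}"] by (metis interior_real_atLeast greaterThan_iff less_imp_le)
  have db': "\<And>t. t > 0 \<Longrightarrow> (b has_real_derivative bd t) (at t)"
    using db at_within_interior[of _ "{0::real..}"] by (metis interior_real_atLeast greaterThan_iff less_imp_le)
  have cs: "continuous_on {0..} s"
    using ds DERIV_continuous continuous_on_eq_continuous_within by (metis atLeast_iff)
  have cb: "continuous_on {0..} b"
    using db DERIV_continuous continuous_on_eq_continuous_within by (metis atLeast_iff)
  have cmu: "continuous_on {0..s_in} mu"
    using mu_deriv DERIV_continuous continuous_on_eq_continuous_within by metis
  have cDf: "continuous_on UNIV Df" unfolding Df_eq by (intro continuous_intros)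
  have inv: "\<forall>t\<ge>0. 0 \<le> s t \<and> s t < s_in \<and> 0 < b t"
  proof (rule ccontr)
    assume nc: "\<not> ?thesis"
    define A where "A = {t. 0 \<le> t \<and> \<not> (0 \<le> s t \<and> s t < s_in \<and> 0 < b t)}"
    have Ane: "A \<noteq> {}" using nc unfolding A_def by auto
    have Abdd: "bdd_below A" unfolding A_def by (rule bdd_belowI[of _ 0]) auto
    define t1 where "t1 = Inf A"
    have t1pos: "t1 \<ge> 0" unfolding t1_def using Ane by (intro cInf_greatest) (auto simp: A_def)
    have before: "\<And>t. 0 \<le> t \<Longrightarrow> t < t1 \<Longrightarrow> 0 \<le> s t \<and> s t < s_in \<and> 0 < b t"
    proof (rule ccontr)
      fix t assume "0 \<le> t" "t < t1" "\<not> (0 \<le> s t \<and> s t < s_in \<and> 0 < b t)"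
      then have "t \<in> A" unfolding A_def by auto
      then have "t1 \<le> t" unfolding t1_def using cInf_lower[OF _ Abdd] by auto
      then show False using \<open>t < t1\<close> by simp
    qed
    have Pt1: "0 \<le> s t1 \<and> s t1 < s_in \<and> 0 < b t1"
    proof (cases "t1 = 0")
      case True then show ?thesis using s0 by simp
    next
      case False
      then have t1p: "t1 > 0" using t1pos by simp
      have evl: "eventually (\<lambda>t. 0 \<le> s t \<and> s t < s_in \<and> 0 < b t) (at_left t1)"
        using eventually_at_left_real[OF t1p] by eventually_elim (use before in auto)
      have ls: "(s \<longlongrightarrow> s t1) (at_left t1)"
        using DERIV_isCont[OF ds'[OF t1p]] by (simp add: isCont_def filterlim_at_split)
      have lb: "(b \<longlongrightarrow> b t1) (at_left t1)"
        using DERIV_isCont[OF db'[OF t1p]] by (simp add: isCont_def filterlim_at_split)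
      have e1: "eventually (\<lambda>t. 0 \<le> s t) (at_left t1)" "eventually (\<lambda>t. s t \<le> s_in) (at_left t1)"
        "eventually (\<lambda>t. 0 \<le> b t) (at_left t1)"
        using evl by (auto elim: eventually_mono)
      have st1: "0 \<le> s t1" "s t1 \<le> s_in"
        using tendsto_lowerbound[OF ls e1(1)] tendsto_upperbound[OF ls e1(2)]
        by (auto simp: trivial_limit_at_left_real)
      have bt1: "0 \<le> b t1"
        using tendsto_lowerbound[OF lb e1(3)] by (auto simp: trivial_limit_at_left_real)
      have "b 0 * exp (Dmax * 0) \<le> b t1 * exp (Dmax * t1)"
      proof (rule mono_interior[where f = "\<lambda>t. b t * exp (Dmax * t)"
            and f' = "\<lambda>t. (bd t + Dmax * b t) * exp (Dmax * t)"])
        show "0 \<le> t1" using t1pos .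
        show "continuous_on {0..t1} (\<lambda>t. b t * exp (Dmax * t))"
          using continuous_on_subset[OF cb, of "{0..t1}"] by (auto intro!: continuous_intros)
      next
        fix x assume x: "0 < x" "x < t1"
        show "((\<lambda>t. b t * exp (Dmax * t)) has_real_derivative (bd x + Dmax * b x) * exp (Dmax * x)) (at x)"
          using db'[OF x(1)] by (auto intro!: derivative_eq_intros simp: algebra_simps)
        have P: "0 \<le> s x" "s x < s_in" "0 < b x" using before[of x] x by auto
        have "mu (s x) \<ge> 0" using mu_nonneg P by auto
        moreover have "Df (s x) \<le> Dmax" using Df_bd by auto
        ultimately have "(mu (s x) + (Dmax - Df (s x))) * b x \<ge> 0" using P by (intro mult_nonneg_nonneg) auto
        moreover have "bd x + Dmax * b x = (mu (s x) + (Dmax - Df (s x))) * b x"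
          unfolding bd_def by (simp add: algebra_simps)
        ultimately show "0 \<le> (bd x + Dmax * b x) * exp (Dmax * x)" by simp
      qed
      then have bpos: "b t1 > 0" using s0 bt1
        by (metis exp_gt_zero less_eq_real_def mult_eq_0_iff mult_zero_right order.strict_trans2 mult_pos_pos)
      have "s t1 \<noteq> s_in"
      proof
        assume eq: "s t1 = s_in"
        have "sd t1 = - mu s_in * b t1" unfolding sd_def using eq by simp
        moreover have "mu s_in > 0" using mu_pos s_in_pos by auto
        ultimately have "sd t1 < 0" using bpos by simp
        from DERIV_neg_dec_left[OF ds'[OF t1p] this] obtain d where
          d: "d > 0" "\<forall>h>0. h < d \<longrightarrow> s t1 < s (t1 - h)" by blast
        define h where "h = min (d/2) (t1/2)"
        have "h > 0" "h < d" "h < t1" using d t1p unfolding h_def by auto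
        then have "s (t1 - h) > s_in" using d eq by auto
        moreover have "s (t1 - h) < s_in" using before[of "t1 - h"] \<open>h>0\<close> \<open>h<t1\<close> by auto
        ultimately show False by simp
      qed
      then show ?thesis using st1 bpos by simp
    qed
    have rs: "(s \<longlongrightarrow> s t1) (at_right t1)"
      using cs t1pos unfolding continuous_on_eq_continuous_within continuous_within
      by (auto intro: tendsto_within_subset)
    have rb: "(b \<longlongrightarrow> b t1) (at_right t1)"
      using cb t1pos unfolding continuous_on_eq_continuous_within continuous_within
      by (auto intro: tendsto_within_subset)
    have ev1: "eventually (\<lambda>t. s t < s_in \<and> 0 < b t) (at_right t1)"
      using order_tendstoD(2)[OF rs, of s_in] order_tendstoD(1)[OF rb, of 0] Pt1
      by (auto elim: eventually_elim2)
    have ev2: "eventually (\<lambda>t. 0 \<le> s t) (at_right t1)"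
    proof (cases "s t1 = 0")
      case False
      then show ?thesis using order_tendstoD(1)[OF rs, of 0] Pt1 by (auto elim: eventually_mono)
    next
      case True
      have "sd t1 = Df 0 * s_in" unfolding sd_def using True mu_0 by simp
      then have "sd t1 > 0" using Df_bd[of 0] D_bounds s_in_pos by simp
      from has_real_derivative_pos_inc_right[OF ds[OF t1pos] this] obtain d where
        d: "d > 0" "\<forall>h>0. t1 + h \<in> {0..} \<longrightarrow> h < d \<longrightarrow> s t1 < s (t1 + h)" by blast
      have "eventually (\<lambda>t. t \<in> {t1<..<t1+d}) (at_right t1)"
        using eventually_at_right_real d by simp
      then show ?thesis
      proof eventually_elim
        case (elim t)
        then show ?case using d(2)[rule_format, of "t - t1"] True t1pos by auto
      qed
    qed
    have "eventually (\<lambda>t. 0 \<le> s t \<and> s t < s_in \<and> 0 < b t) (at_right t1)"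
      using ev1 ev2 by eventually_elim auto
    then obtain u where u: "u > t1" "\<forall>y>t1. y < u \<longrightarrow> 0 \<le> s y \<and> s y < s_in \<and> 0 < b y"
      using eventually_at_right[of t1 "t1 + 1"] by auto
    have "Inf A < u" using u unfolding t1_def by simp
    then obtain a where a: "a \<in> A" "a < u" using cInf_less_iff[OF Ane Abdd] by auto
    have "t1 \<le> a" unfolding t1_def using cInf_lower[OF a(1) Abdd] .
    moreover have "a \<noteq> t1" using a(1) Pt1 unfolding A_def by auto
    ultimately show False using u a unfolding A_def by auto
  qed
  define w where "w = (\<lambda>t. s t + b t - s_in)"
  have wb: "\<And>t. 0 \<le> t \<Longrightarrow> w t ^ 2 * exp (2 * Dmin * t) \<le> w 0 ^ 2"
  proof -
    fix t :: real assume t: "0 \<le> t"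
    have "- ((\<lambda>t. w t ^ 2 * exp (2 * Dmin * t)) 0) \<le> - ((\<lambda>t. w t ^ 2 * exp (2 * Dmin * t)) t)"
    proof (rule mono_interior[where f = "\<lambda>t. - (w t ^ 2 * exp (2 * Dmin * t))"
          and f' = "\<lambda>t. 2 * w t ^ 2 * exp (2 * Dmin * t) * (Df (s t) - Dmin)"])
      show "0 \<le> t" using t .
      show "continuous_on {0..t} (\<lambda>t. - (w t ^ 2 * exp (2 * Dmin * t)))"
        using continuous_on_subset[OF cb, of "{0..t}"] continuous_on_subset[OF cs, of "{0..t}"]
        unfolding w_def by (auto intro!: continuous_intros)
    next
      fix x assume x: "0 < x" "x < t"
      have "((\<lambda>t. - (w t ^ 2 * exp (2 * Dmin * t))) has_real_derivative
          - (2 * w x * (sd x + bd x) * exp (2 * Dmin * x) + w x ^ 2 * (exp (2 * Dmin * x) * (2 * Dmin)))) (at x)"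
        unfolding w_def using ds'[OF x(1)] db'[OF x(1)]
        by (auto intro!: derivative_eq_intros)
      moreover have "sd x + bd x = - Df (s x) * w x" unfolding sd_def bd_def w_def by (simp add: algebra_simps)
      then have "- (2 * w x * (sd x + bd x) * exp (2 * Dmin * x) + w x ^ 2 * (exp (2 * Dmin * x) * (2 * Dmin)))
         = 2 * w x ^ 2 * exp (2 * Dmin * x) * (Df (s x) - Dmin)"
        by (simp only:) (simp add: algebra_simps power2_eq_square)
      ultimately show "((\<lambda>t. - (w t ^ 2 * exp (2 * Dmin * t))) has_real_derivative
          2 * w x ^ 2 * exp (2 * Dmin * x) * (Df (s x) - Dmin)) (at x)"
        by metis
      show "0 \<le> 2 * w x ^ 2 * exp (2 * Dmin * x) * (Df (s x) - Dmin)"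
        using Df_bd[of "s x"] by simp
    qed
    then show "w t ^ 2 * exp (2 * Dmin * t) \<le> w 0 ^ 2" by simp
  qed
  have wabs: "\<And>t. 0 \<le> t \<Longrightarrow> \<bar>w t\<bar> \<le> \<bar>w 0\<bar> * exp (- Dmin * t)"
  proof -
    fix t :: real assume t: "0 \<le> t"
    have "w t ^ 2 = (w t ^ 2 * exp (2 * Dmin * t)) * exp (- (2 * Dmin * t))"
      by (simp add: exp_minus field_simps)
    also have "\<dots> \<le> w 0 ^ 2 * exp (- (2 * Dmin * t))"
      using wb[OF t] by (intro mult_right_mono) auto
    also have "\<dots> = (\<bar>w 0\<bar> * exp (- Dmin * t)) ^ 2"
    proof -
      have "exp (- (2*Dmin*t)) = exp (- Dmin * t) * exp (- Dmin * t)" by (subst mult_exp_exp) simp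
      then show ?thesis by (simp add: power_mult_distrib power2_eq_square)
    qed
    finally have "\<bar>w t\<bar> ^ 2 \<le> (\<bar>w 0\<bar> * exp (- Dmin * t)) ^ 2" by simp
    then show "\<bar>w t\<bar> \<le> \<bar>w 0\<bar> * exp (- Dmin * t)" by (rule power2_le_imp_le) simp
  qed
  have wbd: "\<And>t. 0 \<le> t \<Longrightarrow> \<bar>w t\<bar> \<le> \<bar>w 0\<bar>"
  proof -
    fix t :: real assume t: "0 \<le> t"
    have "exp (- Dmin * t) \<le> 1" using t D_bounds by simp
    then show "\<bar>w t\<bar> \<le> \<bar>w 0\<bar>" using wabs[OF t]
      by (meson abs_ge_zero mult_left_le order_trans)
  qed
  have wlim: "(w \<longlongrightarrow> 0) at_top"
  proof (rule Lim_null_comparison)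
    show "eventually (\<lambda>t. norm (w t) \<le> \<bar>w 0\<bar> * exp (- Dmin * t)) at_top"
      using eventually_ge_at_top[of "0::real"] by eventually_elim (use wabs in auto)
    show "((\<lambda>t. \<bar>w 0\<bar> * exp (- Dmin * t)) \<longlongrightarrow> 0) at_top"
      using D_bounds by real_asymp
  qed
  have bddmu': "bdd_below (mu' ` {0..s_in})"
    using compact_continuous_image[OF mu'_cont compact_Icc]
    by (intro bounded_imp_bdd_below compact_imp_bounded)
  have psi: "\<And>x y. 0 \<le> x \<Longrightarrow> x < y \<Longrightarrow> y \<le> s_in \<Longrightarrow> mu x + G1 * x < mu y + G1 * y"
  proof -
    fix x y :: real assume xy: "0 \<le> x" "x < y" "y \<le> s_in"
    have c: "continuous_on {x..y} (\<lambda>t. mu t + G1 * t)"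
      using continuous_on_subset[OF cmu, of "{x..y}"] xy by (auto intro!: continuous_intros)
    have dz: "\<And>z. x < z \<Longrightarrow> z < y \<Longrightarrow> ((\<lambda>t. mu t + G1 * t) has_real_derivative mu' z + G1) (at z)"
    proof -
      fix z assume z: "x < z" "z < y"
      have "(mu has_real_derivative mu' z) (at z within {0..s_in})" using mu_deriv z xy by auto
      moreover have "at z within {0..s_in} = at z" using z xy by (intro at_within_Icc_at) auto
      ultimately have "(mu has_real_derivative mu' z) (at z)" by simp
      then show "((\<lambda>t. mu t + G1 * t) has_real_derivative mu' z + G1) (at z)"
        by (auto intro!: derivative_eq_intros)
    qed
    from MVT[OF xy(2) c] dz obtain l z where z: "x < z" "z < y"
      "DERIV (\<lambda>t. mu t + G1 * t) z :> l" "(mu y + G1 * y) - (mu x + G1 * x) = (y - x) * l"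
      using real_differentiable_def by blast
    have "l = mu' z + G1" using DERIV_unique[OF z(3) dz[OF z(1,2)]] .
    moreover have "(INF x\<in>{0..s_in}. mu' x) \<le> mu' z"
      using z xy by (intro cInf_lower bddmu') auto
    ultimately have "l > 0" using G1_deriv by linarith
    then show "mu x + G1 * x < mu y + G1 * y" using z(4) xy
      by (smt (verit) mult_pos_pos)
  qed
  obtain xM where xM: "xM \<in> {0..s_in}" "\<forall>y\<in>{0..s_in}. mu y \<le> mu xM"
    using continuous_attains_sup[OF compact_Icc _ cmu] s_in_pos by auto
  have Mmu: "mu xM < Dmax" using Dmax_mu xM by auto
  obtain xm where xm: "xm \<in> {s_min..s_in}" "\<forall>y\<in>{s_min..s_in}. mu xm \<le> mu y"
    using continuous_attains_inf[OF compact_Icc _ continuous_on_subset[OF cmu, of "{s_min..s_in}"]] s_min by auto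
  have mmu: "Dmin < mu xm" using Dmin_mu xm by auto
  have sbar_lt: "0 < sbar" "sbar < s_in" using sbar s_min by auto
  have mucont: "isCont mu sbar"
  proof -
    have "(mu has_real_derivative mu' sbar) (at sbar within {0..s_in})" using mu_deriv sbar_lt by auto
    moreover have "at sbar within {0..s_in} = at sbar" using sbar_lt by (intro at_within_Icc_at) auto
    ultimately show ?thesis using DERIV_isCont by simp
  qed
  show ?thesis
  proof
    assume eqD: "Dbar = mu sbar"
    show "(s \<longlongrightarrow> sbar) at_top"
      unfolding tendsto_iff
    proof (intro allI impI)
      fix e :: real assume e: "e > 0"
      define ep where "ep = min e (min sbar ((s_in - sbar)/2))"
      have ep: "0 < ep" "ep \<le> e" "ep \<le> sbar" "ep \<le> (s_in - sbar)/2"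
        unfolding ep_def using e sbar_lt by (auto simp: min_def)
      define alo where "alo = sbar - ep/2"
      define ahi where "ahi = sbar + ep/2"
      have a_pos: "0 < alo" "alo < sbar" "sbar < ahi" "ahi < sbar + ep" "sbar + ep < s_in"
        unfolding alo_def ahi_def using ep sbar_lt by auto
      have sdeq: "\<And>t. sd t = (Df (s t) - mu (s t)) * (s_in - s t) - mu (s t) * w t"
        unfolding sd_def w_def by (simp add: algebra_simps)
      define d1 where "d1 = min (Dmax - mu xM) ((mu sbar + G1 * sbar) - (mu alo + G1 * alo))"
      have d1: "d1 > 0" unfolding d1_def using Mmu psi[of alo sbar] a_pos sbar_lt by auto
      have lowreg: "\<And>x. 0 \<le> x \<Longrightarrow> x \<le> alo \<Longrightarrow> Df x - mu x \<ge> d1"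
      proof -
        fix x assume x: "0 \<le> x" "x \<le> alo"
        have arg: "Dbar - G1 * (x - sbar) \<ge> Dbar" using x a_pos G1_pos
          by (simp add: mult_nonneg_nonpos less_imp_le)
        then have "Df x = min Dmax (Dbar - G1 * (x - sbar))" unfolding Df_eq using Dbar D_bounds by auto
        moreover have "Dmax - mu x \<ge> Dmax - mu xM" using xM x a_pos by auto
        moreover have "mu x + G1 * x \<le> mu alo + G1 * alo"
          using psi[of x alo] x a_pos by (cases "x = alo") auto
        ultimately show "Df x - mu x \<ge> d1" unfolding d1_def using eqD by (auto simp: algebra_simps)
      qed
      define d2 where "d2 = min (mu xm - Dmin) ((mu ahi + G1 * ahi) - (mu sbar + G1 * sbar))"
      have d2: "d2 > 0" unfolding d2_def using mmu psi[of sbar ahi] a_pos sbar_lt by auto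
      have upreg: "\<And>x. ahi \<le> x \<Longrightarrow> x \<le> s_in \<Longrightarrow> mu x - Df x \<ge> d2"
      proof -
        fix x assume x: "ahi \<le> x" "x \<le> s_in"
        have arg: "Dbar - G1 * (x - sbar) \<le> Dbar" using x a_pos G1_pos
          by (simp add: mult_nonneg_nonneg less_imp_le)
        then have "Df x = max Dmin (Dbar - G1 * (x - sbar))" unfolding Df_eq using Dbar D_bounds by auto
        moreover have "mu x - Dmin \<ge> mu xm - Dmin" using xm x a_pos sbar by auto
        moreover have "mu x + G1 * x \<ge> mu ahi + G1 * ahi"
          using psi[of ahi x] x a_pos by (cases "x = ahi") auto
        ultimately show "mu x - Df x \<ge> d2" unfolding d2_def using eqD by (auto simp: algebra_simps)
      qed
      define n1 where "n1 = d1 * (s_in - sbar) / (2 * Dmax)"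
      define n2 where "n2 = d2 * (s_in - sbar) / (4 * Dmax)"
      have n12: "n1 > 0" "n2 > 0" unfolding n1_def n2_def using d1 d2 sbar_lt D_bounds by auto
      have "eventually (\<lambda>t. \<bar>w t\<bar> < n1 \<and> \<bar>w t\<bar> < n2 \<and> t \<ge> 1) at_top"
      proof -
        have mn: "min n1 n2 > 0" using n12 by simp
        have "eventually (\<lambda>t. \<bar>w t\<bar> < min n1 n2) at_top"
          using wlim[unfolded tendsto_iff, rule_format, OF mn] by (simp add: dist_real_def)
        then show ?thesis using eventually_ge_at_top[of "1::real"] by eventually_elim auto
      qed
      then obtain T1 where T1: "\<forall>t\<ge>T1. \<bar>w t\<bar> < n1 \<and> \<bar>w t\<bar> < n2 \<and> t \<ge> 1"
        by (auto simp: eventually_at_top_linorder)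
      have lowd: "\<And>t. t \<ge> T1 \<Longrightarrow> s t \<le> alo \<Longrightarrow> sd t \<ge> d1 * (s_in - sbar) / 2"
      proof -
        fix t assume t: "t \<ge> T1" "s t \<le> alo"
        have tp: "t \<ge> 0" using T1 t by force
        have st: "0 \<le> s t" "s t < s_in" using inv tp by auto
        have p: "Df (s t) - mu (s t) \<ge> d1" using lowreg st t by auto
        have "d1 * (s_in - sbar) \<le> (Df (s t) - mu (s t)) * (s_in - s t)"
          using p d1 t a_pos sbar_lt by (intro mult_mono) auto
        moreover have "mu (s t) * w t \<le> Dmax * n1"
        proof -
          have "mu (s t) * w t \<le> mu (s t) * \<bar>w t\<bar>" using mu_nonneg st
            by (intro mult_left_mono) auto
          also have "\<dots> \<le> Dmax * n1" using mu_nonneg Dmax_mu st T1 t D_bounds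
            by (intro mult_mono) (auto simp: less_imp_le)
          finally show ?thesis .
        qed
        moreover have "Dmax * n1 = d1 * (s_in - sbar) / 2" unfolding n1_def using D_bounds by simp
        ultimately show "sd t \<ge> d1 * (s_in - sbar) / 2" unfolding sdeq by linarith
      qed
      have "\<exists>t0\<ge>T1. s t0 > alo"
      proof (rule ccontr)
        assume "\<not> ?thesis"
        then have all: "\<forall>t\<ge>T1. s t \<le> alo" by auto
        show False
        proof (rule escape[of T1 s sd "d1 * (s_in - sbar) / 2" s_in])
          show "\<forall>t\<ge>T1. (s has_real_derivative sd t) (at t)" using T1 ds' by force
          show "\<forall>t\<ge>T1. d1 * (s_in - sbar) / 2 \<le> sd t" using lowd all by auto
          show "0 < d1 * (s_in - sbar) / 2" using d1 sbar_lt by auto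
          show "\<forall>t\<ge>T1. s t \<le> s_in" using inv T1 by (force simp: less_imp_le)
        qed
      qed
      then obtain t0 where t0: "t0 \<ge> T1" "s t0 > alo" by auto
      have lowfin: "\<And>t. t \<ge> t0 \<Longrightarrow> s t \<ge> alo"
      proof -
        fix t assume "t \<ge> t0"
        show "s t \<ge> alo"
        proof (rule barrier_low[of t0 s sd "alo - 1" alo t])
          show "\<forall>t>t0. (s has_real_derivative sd t) (at t)" using T1 t0 ds' by force
          show "continuous_on {t0..} s" using T1 t0 by (intro continuous_on_subset[OF cs]) force
          show "\<forall>t>t0. alo - 1 < s t \<and> s t < alo \<longrightarrow> 0 < sd t"
          proof (intro allI impI)
            fix t assume "t > t0" "alo - 1 < s t \<and> s t < alo"
            then have "sd t \<ge> d1 * (s_in - sbar) / 2" using lowd t0 by force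
            moreover have "d1 * (s_in - sbar) / 2 > 0" using d1 sbar_lt by simp
            ultimately show "0 < sd t" by linarith
          qed
        qed (use t0 \<open>t \<ge> t0\<close> in auto)
      qed
      have "\<exists>t0\<ge>T1. s t0 < ahi"
      proof (rule ccontr)
        assume "\<not> ?thesis"
        then have all: "\<forall>t\<ge>T1. s t \<ge> ahi" by auto
        show False
        proof (rule escape[of T1 "\<lambda>t. ln (b t)" "\<lambda>t. mu (s t) - Df (s t)" d2 "ln (s_in + \<bar>w 0\<bar>)"])
          show "\<forall>t\<ge>T1. ((\<lambda>t. ln (b t)) has_real_derivative mu (s t) - Df (s t)) (at t)"
          proof (intro allI impI)
            fix t assume "t \<ge> T1"
            then have tp: "t > 0" using T1 by force
            have P: "0 \<le> s t" "s t < s_in" "0 < b t" using inv tp by auto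
            have "((\<lambda>t. ln (b t)) has_real_derivative inverse (b t) * bd t) (at t)"
              by (rule DERIV_chain2[OF DERIV_ln db'[OF tp]]) (use P in simp)
            moreover have "inverse (b t) * bd t = mu (s t) - Df (s t)"
              unfolding bd_def using P(3) by (simp add: field_simps)
            ultimately show "((\<lambda>t. ln (b t)) has_real_derivative mu (s t) - Df (s t)) (at t)" by simp
          qed
          show "\<forall>t\<ge>T1. d2 \<le> mu (s t) - Df (s t)"
          proof (intro allI impI)
            fix t assume "t \<ge> T1"
            then have tp: "t > 0" using T1 by force
            have P: "0 \<le> s t" "s t < s_in" "0 < b t" using inv tp by auto
            show "d2 \<le> mu (s t) - Df (s t)" using upreg[of "s t"] all[rule_format, OF \<open>t \<ge> T1\<close>] P by simp
          qed
          show "0 < d2" using d2 .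
          show "\<forall>t\<ge>T1. ln (b t) \<le> ln (s_in + \<bar>w 0\<bar>)"
          proof (intro allI impI)
            fix t assume "t \<ge> T1"
            then have tp: "t > 0" using T1 by force
            have P: "0 \<le> s t" "s t < s_in" "0 < b t" using inv tp by auto
            have "b t = w t + s_in - s t" unfolding w_def by simp
            then have "b t \<le> s_in + \<bar>w 0\<bar>" using wbd[of t] P tp by linarith
            then show "ln (b t) \<le> ln (s_in + \<bar>w 0\<bar>)" using P by simp
          qed
        qed
      qed
      then obtain t1 where t1: "t1 \<ge> T1" "s t1 < ahi" by auto
      have upd: "\<And>t. t \<ge> T1 \<Longrightarrow> ahi < s t \<Longrightarrow> s t < sbar + ep \<Longrightarrow> sd t < 0"
      proof -
        fix t assume t: "t \<ge> T1" "ahi < s t" "s t < sbar + ep"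
        have tp: "t \<ge> 0" using T1 t by force
        have st: "0 \<le> s t" "s t < s_in" using inv tp by auto
        have p: "mu (s t) - Df (s t) \<ge> d2" using upreg st t by auto
        have q: "s_in - s t \<ge> (s_in - sbar) / 2" using t ep by auto
        have "d2 * ((s_in - sbar) / 2) \<le> (mu (s t) - Df (s t)) * (s_in - s t)"
          using p d2 q sbar_lt by (intro mult_mono) auto
        moreover have "- (mu (s t) * w t) \<le> Dmax * n2"
        proof -
          have "- (mu (s t) * w t) = mu (s t) * (- w t)" by simp
          also have "\<dots> \<le> mu (s t) * \<bar>w t\<bar>" using mu_nonneg st
            by (intro mult_left_mono) auto
          also have "\<dots> \<le> Dmax * n2" using mu_nonneg Dmax_mu st T1 t D_bounds
            by (intro mult_mono) (auto simp: less_imp_le)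
          finally show ?thesis .
        qed
        moreover have "Dmax * n2 = d2 * (s_in - sbar) / 4" unfolding n2_def using D_bounds by simp
        moreover have "d2 * (s_in - sbar) > 0" using d2 sbar_lt by simp
        moreover have "sd t = - ((mu (s t) - Df (s t)) * (s_in - s t)) - mu (s t) * w t"
          unfolding sdeq by (simp add: algebra_simps)
        ultimately show "sd t < 0" by linarith
      qed
      have upfin: "\<And>t. t \<ge> t1 \<Longrightarrow> s t \<le> ahi"
      proof -
        fix t assume "t \<ge> t1"
        show "s t \<le> ahi"
        proof (rule barrier_up[of t1 s sd ahi "sbar + ep" t])
          show "\<forall>t>t1. (s has_real_derivative sd t) (at t)" using T1 t1 ds' by force
          show "continuous_on {t1..} s" using T1 t1 by (intro continuous_on_subset[OF cs]) force
          show "\<forall>t>t1. ahi < s t \<and> s t < sbar + ep \<longrightarrow> sd t < 0"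
            using upd t1 by force
        qed (use t1 \<open>t \<ge> t1\<close> a_pos in auto)
      qed
      show "eventually (\<lambda>t. dist (s t) sbar < e) at_top"
        unfolding eventually_at_top_linorder
      proof (intro exI[of _ "max t0 t1"] allI impI)
        fix t assume "t \<ge> max t0 t1"
        then have "alo \<le> s t" "s t \<le> ahi" using lowfin upfin by auto
        then show "dist (s t) sbar < e" unfolding dist_real_def alo_def ahi_def using ep by auto
      qed
    qed
  next
    assume lim: "(s \<longlongrightarrow> sbar) at_top"
    have beq: "b = (\<lambda>t. w t + s_in - s t)" unfolding w_def by auto
    have blim0: "(b \<longlongrightarrow> 0 + s_in - sbar) at_top" unfolding beq
      by (intro tendsto_intros wlim lim)
    then have blim: "(b \<longlongrightarrow> s_in - sbar) at_top" by simp
    have mlim: "((\<lambda>t. mu (s t)) \<longlongrightarrow> mu sbar) at_top" by (rule isCont_tendsto_compose[OF mucont lim])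
    have Dlim: "((\<lambda>t. Df (s t)) \<longlongrightarrow> max Dmin (min Dmax (Dbar - G1 * (sbar - sbar)))) at_top"
      unfolding Df_eq by (intro tendsto_intros lim)
    have "max Dmin (min Dmax (Dbar - G1 * (sbar - sbar))) = Dbar" using Dbar by auto
    define L where "L = - mu sbar * (s_in - sbar) + Dbar * (s_in - sbar)"
    have sdlim: "(sd \<longlongrightarrow> L) at_top"
      unfolding sd_def L_def using Dlim \<open>max Dmin (min Dmax (Dbar - G1 * (sbar - sbar))) = Dbar\<close>
      by (auto intro!: tendsto_intros mlim blim lim)
    have "L = 0"
    proof (rule ccontr)
      assume "L \<noteq> 0"
      then consider "L > 0" | "L < 0" by linarith
      then show False
      proof cases
        case 1
        have "eventually (\<lambda>t. sd t > L/2 \<and> t \<ge> 1) at_top"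
          using eventually_conj[OF order_tendstoD(1)[OF sdlim, of "L/2"] eventually_ge_at_top[of "1::real"]] 1
          by simp
        then obtain T where T: "\<forall>t\<ge>T. sd t > L/2 \<and> t \<ge> 1" by (auto simp: eventually_at_top_linorder)
        show False
          by (rule escape[of T s sd "L/2" s_in]) (use T 1 ds' inv in \<open>auto simp: less_imp_le\<close>)
      next
        case 2
        have "eventually (\<lambda>t. sd t < L/2 \<and> t \<ge> 1) at_top"
          using eventually_conj[OF order_tendstoD(2)[OF sdlim, of "L/2"] eventually_ge_at_top[of "1::real"]] 2
          by simp
        then obtain T where T: "\<forall>t\<ge>T. sd t < L/2 \<and> t \<ge> 1" by (auto simp: eventually_at_top_linorder)
        have d: "\<forall>t\<ge>T. ((\<lambda>t. - s t) has_real_derivative - sd t) (at t)"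
          using T ds' by (auto intro!: derivative_eq_intros)
        show False
          by (rule escape[OF d, of "- L/2" 0]) (use T 2 inv in \<open>auto simp: less_imp_le\<close>)
      qed
    qed
    then have "(Dbar - mu sbar) * (s_in - sbar) = 0" unfolding L_def by (simp add: algebra_simps)
    then show "Dbar = mu sbar" using sbar_lt by simp
  qed
qed

end
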